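(* Let $\mathbb{F}$ be an infinite field with $\operatorname{char}(\mathbb{F})\neq 2$, let $G$ be a group with a group involution $\ast$, extended $\mathbb{F}$-linearly to $\mathbb{F}G$. Suppose that $\mathbb{F}G$ is normal with respect to $\ast$. Then $g^2\in\zeta(G)$ for all $g\in G$.
   Context: A group involution on $G$ is a map $\ast:G\to G$ with $(gh)^\ast=h^\ast g^\ast$ and $(g^\ast)^\ast=g$ for all $g,h\in G$; it is extended $\mathbb{F}$-linearly to an algebra involution of $\mathbb{F}G$. The algebra $\mathbb{F}G$ is normal (with respect to $\ast$) if $\alpha\alpha^\ast=\alpha^\ast\alpha$ for all $\alpha\in\mathbb{F}G$. $\zeta(G)$ denotes the center of $G$. *)

theory Defs
  imports "HOL-Algebra.Group"
begin

definition group_center :: "('g, 'b) monoid_scheme \<Rightarrow> 'g set" where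
  "group_center G = {z \<in> carrier G. \<forall>g \<in> carrier G. z \<otimes>\<^bsub>G\<^esub> g = g \<otimes>\<^bsub>G\<^esub> z}"

definition group_involution :: "('g, 'b) monoid_scheme \<Rightarrow> ('g \<Rightarrow> 'g) \<Rightarrow> bool" where
  "group_involution G s \<longleftrightarrow>
     (\<forall>g \<in> carrier G. s g \<in> carrier G) \<and>
     (\<forall>g \<in> carrier G. \<forall>h \<in> carrier G. s (g \<otimes>\<^bsub>G\<^esub> h) = s h \<otimes>\<^bsub>G\<^esub> s g) \<and>
     (\<forall>g \<in> carrier G. s (s g) = g)"

text \<open>Elements of the group algebra F G: finitely supported coefficient functions
  on the carrier of G (an element sum_g a_g g is represented by g \<mapsto> a_g).\<close>
definition group_alg :: "('g, 'b) monoid_scheme \<Rightarrow> ('g \<Rightarrow> 'f::field) set" where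
  "group_alg G = {a. finite {g. a g \<noteq> 0} \<and> {g. a g \<noteq> 0} \<subseteq> carrier G}"

definition galg_mult :: "('g, 'b) monoid_scheme \<Rightarrow> ('g \<Rightarrow> 'f::field) \<Rightarrow> ('g \<Rightarrow> 'f) \<Rightarrow> 'g \<Rightarrow> 'f" where
  "galg_mult G a b x =
     (if x \<in> carrier G
      then (\<Sum>g \<in> {g \<in> carrier G. a g \<noteq> 0}. a g * b (inv\<^bsub>G\<^esub> g \<otimes>\<^bsub>G\<^esub> x))
      else 0)"

text \<open>Linear extension of the involution s to F G:
  (sum_g a_g g)^* = sum_g a_g s(g), whose coefficient at x is a(s x).\<close>
definition galg_star :: "('g, 'b) monoid_scheme \<Rightarrow> ('g \<Rightarrow> 'g) \<Rightarrow> ('g \<Rightarrow> 'f::field) \<Rightarrow> 'g \<Rightarrow> 'f" where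
  "galg_star G s a x = (if x \<in> carrier G then a (s x) else 0)"

definition galg_normal :: "('g, 'b) monoid_scheme \<Rightarrow> ('g \<Rightarrow> 'g) \<Rightarrow> 'f::field itself \<Rightarrow> bool" where
  "galg_normal G s _ \<longleftrightarrow>
     (\<forall>a \<in> (group_alg G :: ('g \<Rightarrow> 'f) set).
        galg_mult G a (galg_star G s a) = galg_mult G (galg_star G s a) a)"

end

theory Submission
  imports Defs
begin

definition ind :: "'g set \<Rightarrow> 'g \<Rightarrow> 'f::field" where
  "ind P w = (if w \<in> P then 1 else 0)"

lemma ind_alg:
  assumes "finite P" "P \<subseteq> carrier G"
  shows "(ind P :: 'g \<Rightarrow> 'f::field) \<in> group_alg G"
proof -
  have "{g. (ind P g :: 'f) \<noteq> 0} = P" by (auto simp: ind_def)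
  thus ?thesis using assms by (simp add: group_alg_def)
qed

lemma mult_ind:
  assumes "finite P" "P \<subseteq> carrier G" "z \<in> carrier G"
  shows "galg_mult G (ind P :: 'g \<Rightarrow> 'f::field) b z = (\<Sum>g\<in>P. b (inv\<^bsub>G\<^esub> g \<otimes>\<^bsub>G\<^esub> z))"
proof -
  have e: "{g \<in> carrier G. (ind P g :: 'f) \<noteq> 0} = P" using assms by (auto simp: ind_def)
  show ?thesis unfolding galg_mult_def e using assms
    by (auto intro!: sum.cong simp: ind_def)
qed

lemma star_ind:
  assumes "group_involution G s" "P \<subseteq> carrier G"
  shows "galg_star G s (ind P) = ind (s ` P)"
proof
  fix w
  have c: "\<And>g. g \<in> carrier G \<Longrightarrow> s g \<in> carrier G" and ss: "\<And>g. g \<in> carrier G \<Longrightarrow> s (s g) = g"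
    using assms(1) unfolding group_involution_def by auto
  show "galg_star G s (ind P) w = ind (s ` P) w"
  proof (cases "w \<in> carrier G")
    case True
    have "s w \<in> P \<longleftrightarrow> w \<in> s ` P"
    proof
      assume "s w \<in> P" thus "w \<in> s ` P" using ss[OF True] by (metis image_eqI)
    next
      assume "w \<in> s ` P" then obtain p where "p \<in> P" "w = s p" by auto
      thus "s w \<in> P" using ss assms(2) by auto
    qed
    thus ?thesis using True by (simp add: galg_star_def ind_def)
  next
    case False
    have "w \<notin> s ` P" using False c assms(2) by auto
    thus ?thesis using False by (simp add: galg_star_def ind_def)
  qed
qed

lemma normal_ind:
  assumes "group G" "group_involution G s" "galg_normal G s TYPE('f::field)"
    "finite P" "P \<subseteq> carrier G" "z \<in> carrier G"
  shows "(\<Sum>g\<in>P. (ind (s ` P) (inv\<^bsub>G\<^esub> g \<otimes>\<^bsub>G\<^esub> z) :: 'f))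
       = (\<Sum>g\<in>s ` P. (ind P (inv\<^bsub>G\<^esub> g \<otimes>\<^bsub>G\<^esub> z) :: 'f))"
proof -
  have c: "s ` P \<subseteq> carrier G" using assms(2,5) unfolding group_involution_def by auto
  have "galg_mult G (ind P :: _ \<Rightarrow> 'f) (galg_star G s (ind P)) z
      = galg_mult G (galg_star G s (ind P)) (ind P :: _ \<Rightarrow> 'f) z"
    using assms(3) ind_alg[OF assms(4,5)] unfolding galg_normal_def by metis
  thus ?thesis unfolding star_ind[OF assms(2,5)]
    using mult_ind[OF assms(4,5,6), where 'f='f] mult_ind[OF finite_imageI[OF assms(4)] c assms(6), where 'f='f] by metis
qed

context group begin

lemma key:
  assumes "group G" "group_involution G s" "galg_normal G s TYPE('f::field)"
    "(2::'f) \<noteq> 0" "x \<in> carrier G" "y \<in> carrier G"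
  shows "x \<otimes>\<^bsub>G\<^esub> y = y \<otimes>\<^bsub>G\<^esub> x \<or> x \<otimes>\<^bsub>G\<^esub> y = s x \<otimes>\<^bsub>G\<^esub> s y"
proof -
  have c: "\<And>g. g \<in> carrier G \<Longrightarrow> s g \<in> carrier G" and ss: "\<And>g. g \<in> carrier G \<Longrightarrow> s (s g) = g"
    using assms(2) unfolding group_involution_def by auto
  have comm: "p \<otimes> s p = s p \<otimes> p" if p: "p \<in> carrier G" for p
  proof -
    have "(\<Sum>g\<in>{p}. (ind (s ` {p}) (inv g \<otimes> (p \<otimes> s p)) :: 'f))
       = (\<Sum>g\<in>s ` {p}. (ind {p} (inv g \<otimes> (p \<otimes> s p)) :: 'f))"
      using normal_ind[OF assms(1,2,3), of "{p}" "p \<otimes> s p"] p c by simp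
    hence "(1::'f) = ind {p} (inv (s p) \<otimes> (p \<otimes> s p))" using p c
      by (simp add: ind_def m_assoc[symmetric])
    hence "inv (s p) \<otimes> (p \<otimes> s p) = p" by (auto simp: ind_def split: if_splits)
    hence "s p \<otimes> (inv (s p) \<otimes> (p \<otimes> s p)) = s p \<otimes> p" by simp
    thus ?thesis using p c by (simp add: m_assoc[symmetric])
  qed
  show ?thesis
  proof (rule ccontr)
    assume H: "\<not> ?thesis"
    have ne: "x \<noteq> s y"
    proof
      assume "x = s y" thus False using H comm[OF assms(6)] by simp
    qed
    have ne2: "s x \<noteq> y" using ne ss assms(5) by auto
    have sP: "s ` {x, s y} = {s x, y}" using ss assms(6) by auto
    let ?z = "x \<otimes> y"
    have z: "?z \<in> carrier G" using assms(5,6) by simp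
    have eq: "(\<Sum>g\<in>{x, s y}. (ind {s x, y} (inv g \<otimes> ?z) :: 'f))
       = (\<Sum>g\<in>{s x, y}. (ind {x, s y} (inv g \<otimes> ?z) :: 'f))"
      using normal_ind[OF assms(1,2,3), of "{x, s y}" ?z] sP assms(5,6) c z by simp
    have l1: "inv x \<otimes> ?z = y" using assms(5,6) by (simp add: m_assoc[symmetric])
    have r1: "inv (s x) \<otimes> ?z \<noteq> x"
    proof
      assume "inv (s x) \<otimes> ?z = x"
      hence "s x \<otimes> (inv (s x) \<otimes> ?z) = s x \<otimes> x" by simp
      hence "?z = x \<otimes> s x" using comm[OF assms(5)] c assms(5,6) by (simp add: m_assoc[symmetric])
      hence "y = s x" using assms(5,6) c by simp
      thus False using ne2 by simp
    qed
    have r2: "inv (s x) \<otimes> ?z \<noteq> s y"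
    proof
      assume "inv (s x) \<otimes> ?z = s y"
      hence "s x \<otimes> (inv (s x) \<otimes> ?z) = s x \<otimes> s y" by simp
      hence "?z = s x \<otimes> s y" using c assms(5,6) by (simp add: m_assoc[symmetric])
      thus False using H by simp
    qed
    have r3: "inv y \<otimes> ?z \<noteq> x"
    proof
      assume "inv y \<otimes> ?z = x"
      hence "y \<otimes> (inv y \<otimes> ?z) = y \<otimes> x" by simp
      hence "?z = y \<otimes> x" using c assms(5,6) by (simp add: m_assoc[symmetric])
      thus False using H by simp
    qed
    have r4: "inv y \<otimes> ?z \<noteq> s y"
    proof
      assume "inv y \<otimes> ?z = s y"
      hence "y \<otimes> (inv y \<otimes> ?z) = y \<otimes> s y" by simp
      hence "x \<otimes> y = s y \<otimes> y" using comm[OF assms(6)] c assms(5,6) by (simp add: m_assoc[symmetric])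
      hence "x = s y" using assms(5,6) c by simp
      thus False using ne by simp
    qed
    have "(\<Sum>g\<in>{s x, y}. (ind {x, s y} (inv g \<otimes> ?z) :: 'f)) = 0"
      using ne2 r1 r2 r3 r4 by (simp add: ind_def)
    moreover have "(\<Sum>g\<in>{x, s y}. (ind {s x, y} (inv g \<otimes> ?z) :: 'f)) \<noteq> 0"
    proof (cases "inv (s y) \<otimes> ?z \<in> {s x, y}")
      case True thus ?thesis using ne l1 assms(4) by (simp add: ind_def)
    next
      case False thus ?thesis using ne l1 by (simp add: ind_def)
    qed
    ultimately show False using eq by simp
  qed
qed

lemma main:
  assumes "group G"
    and "(2::'f::field) \<noteq> 0"
    and "group_involution G s"
    and "galg_normal G s TYPE('f)"
  shows "\<forall>g \<in> carrier G. g \<otimes> g \<in> group_center G"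
proof (intro ballI)
  have c: "\<And>g. g \<in> carrier G \<Longrightarrow> s g \<in> carrier G"
    and sm: "\<And>g h. g \<in> carrier G \<Longrightarrow> h \<in> carrier G \<Longrightarrow> s (g \<otimes> h) = s h \<otimes> s g"
    using assms(3) unfolding group_involution_def by auto
  note K = key[OF assms(1,3,4,2)]
  fix g assume g: "g \<in> carrier G"
  have "g \<otimes> g \<otimes> h = h \<otimes> (g \<otimes> g)" if h: "h \<in> carrier G" for h
  proof (cases "g \<otimes> h = h \<otimes> g")
    case True
    thus ?thesis using g h by (metis m_assoc)
  next
    case False
    have a1: "g \<otimes> (g \<otimes> h) \<noteq> (g \<otimes> h) \<otimes> g"
    proof
      assume "g \<otimes> (g \<otimes> h) = (g \<otimes> h) \<otimes> g"
      hence "g \<otimes> (g \<otimes> h) = g \<otimes> (h \<otimes> g)" using g h by (simp add: m_assoc)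
      hence "g \<otimes> h = h \<otimes> g" using g h by simp
      thus False using False by simp
    qed
    have a2: "(h \<otimes> g) \<otimes> g \<noteq> g \<otimes> (h \<otimes> g)"
    proof
      assume "(h \<otimes> g) \<otimes> g = g \<otimes> (h \<otimes> g)"
      hence "(h \<otimes> g) \<otimes> g = (g \<otimes> h) \<otimes> g" using g h by (simp add: m_assoc)
      hence "g \<otimes> h = h \<otimes> g" using g h by simp
      thus False using False by simp
    qed
    have e1: "g \<otimes> (g \<otimes> h) = s g \<otimes> (s h \<otimes> s g)"
      using K[of g "g \<otimes> h"] a1 g h sm by auto
    have e2: "(h \<otimes> g) \<otimes> g = (s g \<otimes> s h) \<otimes> s g"
      using K[of "h \<otimes> g" g] a2 g h sm by auto
    show ?thesis using e1 e2 g h c by (simp add: m_assoc)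
  qed
  thus "g \<otimes> g \<in> group_center G" using g unfolding group_center_def by auto
qed

end

theorem lemma4:
  fixes G :: "('g, 'b) monoid_scheme" and s :: "'g \<Rightarrow> 'g"
  assumes "group G"
    and "infinite (UNIV :: 'f::field set)"
    and "(2::'f) \<noteq> 0"
    and "group_involution G s"
    and "galg_normal G s TYPE('f)"
  shows "\<forall>g \<in> carrier G. g \<otimes>\<^bsub>G\<^esub> g \<in> group_center G"
  using group.main[OF assms(1) assms(1) assms(3-5)] .

end
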